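(* Let $p$ be a state whose ratios $p_i/g_i$ ($i=0,\dots,d-1$) are pairwise distinct. If $T$ is an extreme point of $TP(d)$ that is not biplanar, then $Tp$ is not an extreme point of $p^{TP}=\{Sp:S\in TP(d)\}$.
   Context: Fix $d\ge 2$, $\beta\in(0,\infty)$ and pairwise distinct reals $E_0=0,E_1,\dots,E_{d-1}$. Put $q_{m,n}=e^{-\beta(E_m-E_n)}$, $Z=\sum_j q_{j,0}$, $g_i=q_{i,0}/Z$. A state is a probability vector in $\mathbb{R}^d$. $TP(d)$ is the set of $d\times d$ real matrices with non-negative entries, columns summing to $1$, and $Tg=g$. For $T\in TP(d)$, $G(T)$ is the bipartite graph with left vertices $L_0,\dots,L_{d-1}$ (columns), right vertices $R_0,\dots,R_{d-1}$ (rows), and an edge $\{L_j,R_i\}$ iff $T_{ij}>0$. Given orderings $\lambda,\mu$ (permutations of $\{0,\dots,d-1\}$), place $L_{\lambda_a}$ at height $a$ on one vertical line and $R_{\mu_b}$ at height $b$ on a parallel line, edges drawn straight; the drawing is plain if there are no two edges $\{L_{\lambda_a},R_{\mu_b}\}$, $\{L_{\lambda_{a'}},R_{\mu_{b'}}\}$ with $a<a'$ and $b>b'$. An extreme point $T$ of $TP(d)$ is biplanar if some pair $(\lambda,\mu)$ gives a plain drawing of $G(T)$. *)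

theory Defs
  imports "HOL-Analysis.Analysis"
begin

text \<open>States and matrices are indexed by a finite type 'n with CARD('n) = d.
  A matrix T :: real^'n^'n has entry T$i$j in row i, column j.\<close>

definition gibbs :: "real \<Rightarrow> real^'n \<Rightarrow> real^'n" where
  "gibbs \<beta> E = (\<chi> i. exp (- \<beta> * E$i) / (\<Sum>j\<in>UNIV. exp (- \<beta> * E$j)))"

definition is_state :: "real^'n \<Rightarrow> bool" where
  "is_state p \<longleftrightarrow> (\<forall>i. 0 \<le> p$i) \<and> (\<Sum>i\<in>UNIV. p$i) = 1"

definition TP :: "real \<Rightarrow> real^'n \<Rightarrow> (real^'n^'n) set" where
  "TP \<beta> E = {T. (\<forall>i j. 0 \<le> T$i$j) \<and> (\<forall>j. (\<Sum>i\<in>UNIV. T$i$j) = 1)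
                 \<and> T *v gibbs \<beta> E = gibbs \<beta> E}"

text \<open>Orderings: lam a is the column (left vertex) at height a, mu b the row
  (right vertex) at height b, for a, b < d. Edge between L_j and R_i iff T$i$j > 0.\<close>

definition plain_drawing :: "real^'n^'n \<Rightarrow> (nat \<Rightarrow> 'n) \<Rightarrow> (nat \<Rightarrow> 'n) \<Rightarrow> bool" where
  "plain_drawing T lam mu \<longleftrightarrow>
     \<not> (\<exists>a a' b b'. a < CARD('n) \<and> a' < CARD('n) \<and> b < CARD('n) \<and> b' < CARD('n) \<and>
            0 < T$(mu b)$(lam a) \<and> 0 < T$(mu b')$(lam a') \<and> a < a' \<and> b' < b)"

definition biplanar :: "real \<Rightarrow> real^'n \<Rightarrow> real^'n^'n \<Rightarrow> bool" where
  "biplanar \<beta> E T \<longleftrightarrow> T extreme_point_of TP \<beta> E \<and>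
     (\<exists>lam mu. bij_betw lam {..<CARD('n)} (UNIV::'n set) \<and>
               bij_betw mu {..<CARD('n)} (UNIV::'n set) \<and> plain_drawing T lam mu)"

end

theory Submission imports Defs begin

lemma sorted_enum:
  fixes f :: "'n::finite \<Rightarrow> real"
  shows "\<exists>\<sigma>. bij_betw \<sigma> {..<CARD('n)} (UNIV::'n set) \<and>
     (\<forall>k k'. k \<le> k' \<longrightarrow> k' < CARD('n) \<longrightarrow> f (\<sigma> k) \<le> f (\<sigma> k'))"
proof -
  obtain xs :: "'n list" where xs: "set xs = UNIV" "distinct xs"
    using finite_distinct_list[of "UNIV::'n set"] by auto
  define ys where "ys = sort_key f xs"
  have d: "distinct ys" "set ys = UNIV" using xs by (auto simp: ys_def)
  have len: "length ys = CARD('n)" using distinct_card[OF d(1)] d(2) by simp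
  have s: "sorted (map f ys)" by (simp add: ys_def)
  show ?thesis
  proof (intro exI conjI allI impI)
    show "bij_betw ((!) ys) {..<CARD('n)} UNIV"
      using bij_betw_nth[OF d(1)] len d(2) by simp
  next
    fix k k' :: nat assume "k \<le> k'" "k' < CARD('n)"
    then show "f (ys ! k) \<le> f (ys ! k')"
      using sorted_nth_mono[OF s, of k k'] len by simp
  qed
qed

lemma gibbs_pos: "0 < gibbs \<beta> E $ i"
proof -
  have "0 < (\<Sum>j\<in>UNIV. exp (- \<beta> * E$j))"
    by (rule sum_pos) auto
  then show ?thesis by (simp add: gibbs_def)
qed

lemma TP_polyhedron: fixes E :: "real^'n" shows "polyhedron (TP \<beta> E)"
proof -
  define g where "g = gibbs \<beta> E"
  define A where "A = (\<lambda>(i,j). {T::real^'n^'n. axis i (axis j 1) \<bullet> T \<ge> 0}) ` (UNIV::('n\<times>'n) set)"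
  define B where "B = (\<lambda>j. {T::real^'n^'n. (\<chi> i. axis j 1) \<bullet> T = 1}) ` (UNIV::'n set)"
  define C where "C = (\<lambda>i. {T::real^'n^'n. axis i g \<bullet> T = g$i}) ` (UNIV::'n set)"
  have e1: "axis i (axis j 1) \<bullet> T = T$i$j" for i j and T :: "real^'n^'n"
    by (simp add: inner_axis')
  have e2: "(\<chi> i. axis j 1) \<bullet> T = (\<Sum>i\<in>UNIV. T$i$j)" for j and T :: "real^'n^'n"
    by (simp add: inner_vec_def axis_def if_distrib[of "\<lambda>x. x * _"] sum.delta cong: if_cong)
  have e3: "axis i g \<bullet> T = (T *v g)$i" for i and T :: "real^'n^'n"
    by (simp only: inner_axis') (simp add: inner_vec_def matrix_vector_mult_def mult.commute)
  have eq: "TP \<beta> E = \<Inter>(A \<union> B \<union> C)"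
  proof (intro equalityI subsetI)
    fix T assume "T \<in> TP \<beta> E"
    then show "T \<in> \<Inter>(A \<union> B \<union> C)"
      unfolding TP_def A_def B_def C_def g_def[symmetric]
      by (auto simp: e1 e2 e3)
  next
    fix T assume a: "T \<in> \<Inter>(A \<union> B \<union> C)"
    have "T$i$j \<ge> 0" for i j using a[unfolded Inter_iff, rule_format, of "{T::real^'n^'n. axis i (axis j 1) \<bullet> T \<ge> 0}"]
      by (auto simp: A_def e1)
    moreover have "(\<Sum>i\<in>UNIV. T$i$j) = 1" for j using a[unfolded Inter_iff, rule_format, of "{T::real^'n^'n. (\<chi> i. axis j 1) \<bullet> T = 1}"]
      by (auto simp: B_def e2)
    moreover have "(T *v g)$i = g$i" for i using a[unfolded Inter_iff, rule_format, of "{T::real^'n^'n. axis i g \<bullet> T = g$i}"]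
      by (auto simp: C_def e3)
    ultimately show "T \<in> TP \<beta> E" unfolding TP_def g_def[symmetric] by (auto simp: vec_eq_iff)
  qed
  show ?thesis unfolding eq
    by (rule polyhedron_Inter) (auto simp: A_def B_def C_def polyhedron_halfspace_ge polyhedron_hyperplane)
qed

lemma TP_bounded: fixes E :: "real^'n" shows "bounded (TP \<beta> E)"
proof -
  have "norm T \<le> real (CARD('n) * CARD('n))" if T: "T \<in> TP \<beta> E" for T
  proof -
    have le1: "T$i$j \<le> 1" for i j
    proof -
      have "T$i$j \<le> (\<Sum>k\<in>UNIV. T$k$j)"
        by (rule member_le_sum) (use T in \<open>auto simp: TP_def\<close>)
      then show ?thesis using T by (simp add: TP_def)
    qed
    have "norm T \<le> (\<Sum>i\<in>UNIV. norm (T$i))" by (simp add: norm_vec_def L2_set_le_sum)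
    also have "\<dots> \<le> (\<Sum>i\<in>UNIV. \<Sum>j\<in>UNIV. \<bar>T$i$j\<bar>)"
      by (rule sum_mono) (rule norm_le_l1_cart)
    also have "\<dots> \<le> (\<Sum>i\<in>(UNIV::'n set). \<Sum>j\<in>(UNIV::'n set). 1)"
      using T le1 by (intro sum_mono) (auto simp: TP_def)
    also have "\<dots> = real (CARD('n) * CARD('n))" by simp
    finally show ?thesis .
  qed
  then show ?thesis unfolding bounded_iff by blast
qed

lemma image_polyhedron: fixes E p :: "real^'n" shows "polyhedron ((\<lambda>S. S *v p) ` TP \<beta> E)"
proof -
  have "linear (\<lambda>S::real^'n^'n. S *v p)"
    by (rule linearI) (simp_all add: matrix_vector_mult_add_rdistrib scaleR_matrix_vector_assoc)
  moreover have "polytope (TP \<beta> E)"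
    using TP_polyhedron TP_bounded polytope_eq_bounded_polyhedron by blast
  ultimately have "polytope ((\<lambda>S. S *v p) ` TP \<beta> E)" by (rule polytope_linear_image)
  then show ?thesis using polytope_eq_bounded_polyhedron by blast
qed


lemma sum_delta2: "(\<Sum>k\<in>(UNIV::'n::finite set). (if k = a \<and> l = b then x else 0)) = (if l = b then x else (0::real))"
  by (cases "l = b") auto

lemma sum_delta2': "(\<Sum>l\<in>(UNIV::'n::finite set). (if k = a \<and> l = b then x else 0) * y l) = (if k = a then x * y b else (0::real))"
  by (cases "k = a") (auto simp: if_distrib[of "\<lambda>z. z * _"] cong: if_cong)

theorem mainTheorem10:
  fixes \<beta> :: real and E :: "real^'n" and i0 :: 'n
    and p :: "real^'n" and T :: "real^'n^'n"
  assumes "CARD('n) \<ge> 2"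
    and "\<beta> > 0"
    and "E$i0 = 0"
    and "inj (\<lambda>i. E$i)"
    and "is_state p"
    and "inj (\<lambda>i. p$i / gibbs \<beta> E $ i)"
    and "T extreme_point_of TP \<beta> E"
    and "\<not> biplanar \<beta> E T"
  shows "\<not> (T *v p) extreme_point_of ((\<lambda>S. S *v p) ` TP \<beta> E)"
proof
  define P where "P = (\<lambda>S. S *v p) ` TP \<beta> E"
  define g where "g = gibbs \<beta> E"
  define r where "r = (\<lambda>i. p$i / g $ i)"
  have gpos: "0 < g$k" for k unfolding g_def by (rule gibbs_pos)
  assume "(T *v p) extreme_point_of ((\<lambda>S. S *v p) ` TP \<beta> E)"
  then have "{T *v p} face_of P" unfolding P_def by (simp add: face_of_singleton)
  then have "{T *v p} exposed_face_of P"
    using exposed_face_of_polyhedron[OF image_polyhedron] unfolding P_def by blast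
  then obtain a c where Pc: "P \<subseteq> {x. a \<bullet> x \<le> c}" and sing: "{T *v p} = P \<inter> {x. a \<bullet> x = c}"
    unfolding exposed_face_of_def by blast
  obtain lam where lam: "bij_betw lam {..<CARD('n)} (UNIV::'n set)"
    and lamm: "\<And>k k'. k \<le> k' \<Longrightarrow> k' < CARD('n) \<Longrightarrow> r (lam k) \<le> r (lam k')"
    using sorted_enum[of r] by blast
  obtain mu where mu: "bij_betw mu {..<CARD('n)} (UNIV::'n set)"
    and mum: "\<And>k k'. k \<le> k' \<Longrightarrow> k' < CARD('n) \<Longrightarrow> a $ (mu k) \<le> a $ (mu k')"
    using sorted_enum[of "\<lambda>k. a $ k"] by blast
  have "\<not> plain_drawing T lam mu" using assms(7,8) lam mu by (auto simp: biplanar_def)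
  then obtain x x' y y' where xy: "x < CARD('n)" "x' < CARD('n)" "y < CARD('n)" "y' < CARD('n)"
     "0 < T$(mu y)$(lam x)" "0 < T$(mu y')$(lam x')" "x < x'" "y' < y"
    unfolding plain_drawing_def by blast
  define j where "j = lam x"
  define j' where "j' = lam x'"
  define i where "i = mu y"
  define i' where "i' = mu y'"
  have jj: "j \<noteq> j'" unfolding j_def j'_def
    using bij_betw_imp_inj_on[OF lam] xy by (metis inj_on_def lessThan_iff less_irrefl)
  have ii: "i \<noteq> i'" unfolding i_def i'_def
    using bij_betw_imp_inj_on[OF mu] xy by (metis inj_on_def lessThan_iff less_irrefl)
  have rle: "r j \<le> r j'" unfolding j_def j'_def using lamm xy by simp
  have "r j \<noteq> r j'" using assms(6) jj unfolding r_def g_def inj_def by blast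
  with rle have rlt: "r j < r j'" by simp
  have ale: "a$i' \<le> a$i" unfolding i_def i'_def using mum xy by simp
  have Tij: "0 < T$i$j" "0 < T$i'$j'" using xy unfolding i_def j_def i'_def j'_def by auto
  define t where "t = min (T$i$j) (T$i'$j' * g$j' / g$j)"
  define s where "s = t * g$j / g$j'"
  have tpos: "0 < t" unfolding t_def using Tij gpos by auto
  have tle: "t \<le> T$i$j" unfolding t_def by simp
  have sle: "s \<le> T$i'$j'"
  proof -
    have "t \<le> T$i'$j' * g$j' / g$j" unfolding t_def by simp
    then have "t * g$j \<le> T$i'$j' * g$j'" using gpos[of j] by (simp add: field_simps)
    then show ?thesis unfolding s_def using gpos[of j'] by (simp add: field_simps)
  qed
  have spos: "0 \<le> s" unfolding s_def using tpos gpos[of j] gpos[of j'] by simp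
  have TT: "T \<in> TP \<beta> E" using assms(7) by (simp add: extreme_point_of_def)
  have sg: "s * g$j' = t * g$j" unfolding s_def using gpos[of j'] by simp
  define \<delta> where "\<delta> = (\<lambda>k l. (if k = i' \<and> l = j then t else 0) + (if k = i \<and> l = j then -t else 0)
      + (if k = i \<and> l = j' then s else 0) + (if k = i' \<and> l = j' then -s else (0::real)))"
  define S where "S = (\<chi> k l. T$k$l + \<delta> k l)"
  have Sent: "S$k$l = T$k$l + \<delta> k l" for k l unfolding S_def by simp
  have colsum: "(\<Sum>k\<in>UNIV. \<delta> k l) = 0" for l
    unfolding \<delta>_def by (simp add: sum.distrib sum_delta2 del: sum.delta)
  have rowsum: "(\<Sum>l\<in>UNIV. \<delta> k l * v$l) =
      (if k = i' then t * v$j - s * v$j' else if k = i then s * v$j' - t * v$j else 0)" for k v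
    unfolding \<delta>_def using ii by (simp add: distrib_right sum.distrib sum_delta2')
  have SinTP: "S \<in> TP \<beta> E"
  proof -
    have "0 \<le> S$k$l" for k l
      using TT tpos tle sle spos ii jj unfolding Sent \<delta>_def
      by (auto simp: TP_def)
    moreover have "(\<Sum>k\<in>UNIV. S$k$l) = 1" for l
      using TT colsum[of l] unfolding Sent
      by (simp add: sum.distrib TP_def)
    moreover have "(S *v g)$k = g$k" for k
    proof -
      have "(S *v g)$k = (\<Sum>l\<in>UNIV. T$k$l * g$l) + (\<Sum>l\<in>UNIV. \<delta> k l * g$l)"
        by (simp add: matrix_vector_mult_def Sent distrib_right sum.distrib)
      also have "(\<Sum>l\<in>UNIV. T$k$l * g$l) = (T *v g)$k" by (simp add: matrix_vector_mult_def)
      also have "\<dots> = g$k" using TT unfolding g_def by (simp add: TP_def)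
      finally show ?thesis using rowsum[of k g] sg by simp
    qed
    ultimately show ?thesis unfolding TP_def g_def[symmetric] by (auto simp: vec_eq_iff)
  qed
  have Sp: "(S *v p)$k = (T *v p)$k +
      (if k = i' then t * p$j - s * p$j' else if k = i then s * p$j' - t * p$j else 0)" for k
    by (simp add: matrix_vector_mult_def Sent distrib_right sum.distrib rowsum[symmetric])
  define w where "w = s * p$j' - t * p$j"
  have wpos: "0 < w"
  proof -
    have "w = t * g$j * (r j' - r j)"
      unfolding w_def s_def r_def using gpos[of j] gpos[of j'] by (simp add: field_simps)
    then show ?thesis using tpos gpos[of j] rlt by simp
  qed
  have inner_eq: "a \<bullet> v = (\<Sum>k\<in>UNIV. a$k * v$k)" for v :: "real^'n" by (simp add: inner_vec_def)
  have "a \<bullet> (S *v p) = a \<bullet> (T *v p) + (a$i - a$i') * w"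
  proof -
    have "a \<bullet> (S *v p) = (\<Sum>k\<in>UNIV. a$k * (T *v p)$k) +
        (\<Sum>k\<in>UNIV. a$k * (if k = i' then - w else if k = i then w else 0))"
      unfolding inner_eq Sp w_def by (simp add: distrib_left sum.distrib) (rule sum.cong, auto)
    also have "(\<Sum>k\<in>UNIV. a$k * (if k = i' then - w else if k = i then w else 0)) =
        (\<Sum>k\<in>UNIV. (if k = i' then - a$i' * w else 0) + (if k = i then a$i * w else 0))"
      by (rule sum.cong) (use ii in auto)
    also have "\<dots> = (a$i - a$i') * w" by (simp add: sum.distrib algebra_simps)
    finally show ?thesis unfolding inner_eq by simp
  qed
  moreover have "a \<bullet> (T *v p) = c" using sing by auto
  moreover have SP: "S *v p \<in> P" unfolding P_def using SinTP by blast
  ultimately have "a \<bullet> (S *v p) \<ge> c" using ale wpos by (simp add: mult_nonneg_nonneg)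
  moreover have "a \<bullet> (S *v p) \<le> c" using Pc SP by auto
  ultimately have "S *v p \<in> P \<inter> {x. a \<bullet> x = c}" using SP by auto
  then have "S *v p = T *v p" using sing by auto
  then have "(S *v p)$i = (T *v p)$i" by simp
  then show False using Sp[of i] ii wpos unfolding w_def by simp
qed

end
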